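(* Let $\mathbb{X}$ be an idempotent semifield as described in the context. Let $n,m\geq1$, let $\bm{p}_{1},\ldots,\bm{p}_{m}\in\mathbb{X}^{n}$ be regular vectors, let $w_{1},\ldots,w_{m}$ be positive real numbers, let $h_{1},\ldots,h_{m},d_{1},\ldots,d_{m}\in\mathbb{X}\setminus\{\mathbb{0}\}$, let $\bm{B}=(b_{ik})\in\mathbb{X}^{n\times n}$ (entries may equal $\mathbb{0}$), and let $\bm{f},\bm{g}\in\mathbb{X}^{n}$ be regular vectors with $\bm{f}\leq\bm{g}$. Consider the problem of minimizing, over regular vectors $\bm{x}\in\mathbb{X}^{n}$, $$\bigoplus_{1\leq j\leq m}h_{j}(\bm{p}_{j}^{-}\bm{x}\oplus\bm{x}^{-}\bm{p}_{j})^{w_{j}}$$ subject to $$\bm{p}_{j}^{-}\bm{x}\oplus\bm{x}^{-}\bm{p}_{j}\leq d_{j}\ (j=1,\ldots,m),\qquad \bm{B}\bm{x}\leq\bm{x},\qquad \bm{f}\leq\bm{x}\leq\bm{g}.$$ Define the vectors $\bm{s},\bm{t}$ by $$\bm{s}=\bigoplus_{1\leq j\leq m}d_{j}^{-1}\bm{p}_{j}\oplus\bm{f},\qquad \bm{t}^{-}=\bigoplus_{1\leq j\leq m}d_{j}^{-1}\bm{p}_{j}^{-}\oplus\bm{g}^{-}.$$ Suppose that (1) $\mathrm{Tr}(\bm{B})\leq\mathbb{1}$ and (2) $\bm{t}^{-}\bm{B}^{\ast}\bm{s}\leq\mathbb{1}$. Then the minimum value of the problem is $$\theta=\bigoplus_{1\leq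 j,l\leq m}\left(h_{j}^{\frac{w_{l}}{w_{j}+w_{l}}}h_{l}^{\frac{w_{j}}{w_{j}+w_{l}}}(\bm{p}_{j}^{-}\bm{B}^{\ast}\bm{p}_{l})^{\frac{w_{j}w_{l}}{w_{j}+w_{l}}}\oplus h_{j}(\bm{p}_{j}^{-}\bm{B}^{\ast}\bm{s})^{w_{j}}\oplus h_{l}(\bm{t}^{-}\bm{B}^{\ast}\bm{p}_{l})^{w_{l}}\right),$$ and, with $$\bm{q}=\bigoplus_{1\leq j\leq m}\theta^{-1/w_{j}}h_{j}^{1/w_{j}}\bm{p}_{j},\qquad \bm{r}^{-}=\bigoplus_{1\leq j\leq m}\theta^{-1/w_{j}}h_{j}^{1/w_{j}}\bm{p}_{j}^{-},$$ all solutions of the problem are given in parametric form by $\bm{x}=\bm{B}^{\ast}\bm{u}$, where the parameter vector $\bm{u}$ satisfies $\bm{q}\oplus\bm{s}\leq\bm{u}\leq((\bm{r}^{-}\oplus\bm{t}^{-})\bm{B}^{\ast})^{-}$.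
   Context: An idempotent semifield $(\mathbb{X},\oplus,\otimes,\mathbb{0},\mathbb{1})$ is a set with distinct elements $\mathbb{0},\mathbb{1}$ such that $(\mathbb{X},\oplus,\mathbb{0})$ is a commutative idempotent monoid ($x\oplus x=x$), $(\mathbb{X}\setminus\{\mathbb{0}\},\otimes,\mathbb{1})$ is an abelian group, and $\otimes$ distributes over $\oplus$. The relation $x\leq y\iff x\oplus y=y$ is assumed to be a total order. The sign $\otimes$ is omitted; $x^{-1}$ denotes the multiplicative inverse of $x\neq\mathbb{0}$. It is assumed that powers $x^{p}$ with real exponents $p$ are well defined (with $\mathbb{0}^{p}=\mathbb{0}$ for $p>0$) and obey the usual power rules. Main example: the max-plus semifield $(\mathbb{R}\cup\{-\infty\},\max,+,-\infty,0)$, where $x^{p}=px$ and $x^{-1}=-x$. Vector and matrix operations are the usual ones with $\oplus,\otimes$ in place of $+,\times$; inequalities between vectors are componentwise. A vector is regular if none of its entries equals $\mathbb{0}$. For a nonzero column vector $\bm{x}=(x_{i})$, $\bm{x}^{-}$ is the row vector with entries $x_{i}^{-1}$ if $x_{i}\neq\mathbb{0}$ and $\mathbb{0}$ otherwise (and similarly a nonzero row vector is transformed into a column vector). $\bm{I}$ is the identity matrix (diagonal $\mathbb{1}$, off-diagonal $\mathbb{0}$), $\bm{B}^{0}=\bm{I}$, $\bm{B}^{p}=\bm{B}\bm{B}^{p-1}$. For an $n\times n$ matrix $\bm{B}$: $\mathrm{tr}\,\bm{B}=b_{11}\oplus\cdots\oplus b_{nn}$, $\mathrm{Tr}(\bm{B})=\mathrm{tr}\,\bm{B}\oplus\cdots\oplus\mathrm{tr}\,\bm{B}^{n}$,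 and (when $\mathrm{Tr}(\bm{B})\leq\mathbb{1}$) $\bm{B}^{\ast}=\bm{I}\oplus\bm{B}\oplus\cdots\oplus\bm{B}^{n-1}$. *)

theory Defs
  imports "HOL-Analysis.Finite_Cartesian_Product"
begin

text \<open>Idempotent semifield with a total order given by x \<le> y iff x + y = y,
  where + plays the role of the idempotent addition and * the multiplication.
  pw x p is the real power x^p.\<close>

class idem_semifield = comm_semiring_1 + linorder + inverse +
  fixes pw :: "'a \<Rightarrow> real \<Rightarrow> 'a"
  assumes add_idem: "x + x = x"
    and le_iff_add: "x \<le> y \<longleftrightarrow> x + y = y"
    and mult_nonzero: "x \<noteq> 0 \<Longrightarrow> y \<noteq> 0 \<Longrightarrow> x * y \<noteq> 0"
    and right_inverse_nz: "x \<noteq> 0 \<Longrightarrow> x * inverse x = 1"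
    and pw_nonzero: "x \<noteq> 0 \<Longrightarrow> pw x p \<noteq> 0"
    and pw_one: "pw x 1 = x"
    and pw_add: "x \<noteq> 0 \<Longrightarrow> pw x (p + q) = pw x p * pw x q"
    and pw_pw: "x \<noteq> 0 \<Longrightarrow> pw (pw x p) q = pw x (p * q)"
    and pw_mult_base: "x \<noteq> 0 \<Longrightarrow> y \<noteq> 0 \<Longrightarrow> pw (x * y) p = pw x p * pw y p"
    and pw_zero_base: "p > 0 \<Longrightarrow> pw 0 p = 0"
    and pw_mono: "p > 0 \<Longrightarrow> x \<le> y \<Longrightarrow> pw x p \<le> pw y p"

text \<open>The conjugate x^- (entrywise inverse of nonzero entries, 0 otherwise);
  row and column vectors are both represented as elements of 'a^'n.\<close>
definition conj_vec :: "'a::idem_semifield ^ 'n \<Rightarrow> 'a ^ 'n" where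
  "conj_vec x = (\<chi> i. if x $ i = 0 then 0 else inverse (x $ i))"

definition regular :: "'a::idem_semifield ^ 'n \<Rightarrow> bool" where
  "regular x \<longleftrightarrow> (\<forall>i. x $ i \<noteq> 0)"

definition rc :: "'a::idem_semifield ^ 'n \<Rightarrow> 'a ^ 'n \<Rightarrow> 'a" where
  "rc r c = (\<Sum>i\<in>UNIV. r $ i * c $ i)"

primrec mpow :: "'a::idem_semifield ^ 'n ^ 'n \<Rightarrow> nat \<Rightarrow> 'a ^ 'n ^ 'n" where
  "mpow B 0 = mat 1"
| "mpow B (Suc k) = B ** mpow B k"

definition mtr :: "'a::idem_semifield ^ 'n ^ 'n \<Rightarrow> 'a" where
  "mtr B = (\<Sum>i\<in>UNIV. B $ i $ i)"

definition Tr :: "'a::idem_semifield ^ 'n ^ 'n \<Rightarrow> 'a" where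
  "Tr B = (\<Sum>k\<in>{1..CARD('n)}. mtr (mpow B k))"

definition kstar :: "'a::idem_semifield ^ 'n ^ 'n \<Rightarrow> 'a ^ 'n ^ 'n" where
  "kstar B = (\<Sum>k\<in>{0..<CARD('n)}. mpow B k)"

end

theory Submission
  imports Defs
begin

context idem_semifield begin

lemma zero_le' [simp]: "0 \<le> x"
  using le_iff_add by simp

lemma add_max: "x + y = max x y"
proof (cases "x \<le> y")
  case True then show ?thesis using le_iff_add by (simp add: max_def)
next
  case False then have "y \<le> x" by simp
  then show ?thesis using le_iff_add False by (simp add: max_def add.commute)
qed

lemma add_le_iff' [simp]: "x + y \<le> z \<longleftrightarrow> x \<le> z \<and> y \<le> z"
  by (simp add: add_max)

lemma le_add1': "x \<le> x + y" by (simp add: add_max)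
lemma le_add2': "y \<le> x + y" by (simp add: add_max)

lemma mult_mono_l: "a \<le> b \<Longrightarrow> c * a \<le> c * b"
  using le_iff_add by (metis distrib_left)

lemma mult_mono_r: "a \<le> b \<Longrightarrow> a * c \<le> b * c"
  using mult_mono_l by (simp add: mult.commute)

lemma mult_mono2: "a \<le> b \<Longrightarrow> c \<le> d \<Longrightarrow> a * c \<le> b * d"
  by (meson mult_mono_l mult_mono_r order_trans)

lemma sum_le_iff': "finite A \<Longrightarrow> sum f A \<le> z \<longleftrightarrow> (\<forall>i\<in>A. f i \<le> z)"
  by (induction A rule: finite_induct) auto

lemma member_le_sum': "finite A \<Longrightarrow> i \<in> A \<Longrightarrow> f i \<le> sum f A"
  using sum_le_iff'[of A f "sum f A"] by auto

lemma sum_mono': "(\<And>i. i \<in> A \<Longrightarrow> f i \<le> g i) \<Longrightarrow> sum f A \<le> sum g A"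
proof (cases "finite A")
  case True
  assume "\<And>i. i \<in> A \<Longrightarrow> f i \<le> g i"
  then show ?thesis using True
    by (simp add: sum_le_iff') (meson member_le_sum' order_trans)
qed simp

lemma sum_attained: "finite A \<Longrightarrow> A \<noteq> {} \<Longrightarrow> \<exists>i\<in>A. sum f A = f i"
proof (induction A rule: finite_induct)
  case (insert x F)
  show ?case
  proof (cases "F = {}")
    case True then show ?thesis by simp
  next
    case False
    then obtain i where i: "i \<in> F" "sum f F = f i" using insert by auto
    have "sum f (insert x F) = max (f x) (f i)" using insert i by (simp add: add_max)
    then show ?thesis using i by (auto simp: max_def)
  qed
qed simp

lemma mult_eq_0': "x * y = 0 \<longleftrightarrow> x = 0 \<or> y = 0"
  using mult_nonzero by auto

lemma inverse_nz: "x \<noteq> 0 \<Longrightarrow> inverse x \<noteq> 0"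
proof
  assume x: "x \<noteq> 0" and "inverse x = 0"
  then have "x * inverse x = 0" by simp
  then show False using right_inverse_nz[OF x] by simp
qed

lemma left_inverse_nz: "x \<noteq> 0 \<Longrightarrow> inverse x * x = 1"
  using right_inverse_nz by (simp add: mult.commute)

lemma le_div_iff: "x \<noteq> 0 \<Longrightarrow> a * x \<le> b \<longleftrightarrow> a \<le> b * inverse x"
proof
  assume x: "x \<noteq> 0" and "a * x \<le> b"
  then have "a * x * inverse x \<le> b * inverse x" by (intro mult_mono_r)
  then show "a \<le> b * inverse x" using x by (simp add: mult.assoc right_inverse_nz)
next
  assume x: "x \<noteq> 0" and "a \<le> b * inverse x"
  then have "a * x \<le> b * inverse x * x" by (intro mult_mono_r)
  then show "a * x \<le> b" using x by (simp add: mult.assoc left_inverse_nz)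
qed

lemma inverse_unique: "a * b = 1 \<Longrightarrow> b = inverse a"
proof -
  assume ab: "a * b = 1"
  then have a: "a \<noteq> 0" by auto
  have "b = inverse a * a * b" using a by (simp add: left_inverse_nz)
  also have "\<dots> = inverse a" using ab by (simp add: mult.assoc)
  finally show ?thesis .
qed

lemma inverse_inverse': "x \<noteq> 0 \<Longrightarrow> inverse (inverse x) = x"
  using inverse_unique[of "inverse x" x] left_inverse_nz by simp

lemma inverse_one': "inverse 1 = 1"
  using inverse_unique[of 1 1] by simp

lemma inverse_mult': "x \<noteq> 0 \<Longrightarrow> y \<noteq> 0 \<Longrightarrow> inverse (x * y) = inverse x * inverse y"
  by (rule inverse_unique[symmetric])
     (metis (no_types, lifting) mult.left_commute mult.assoc mult_1_right right_inverse_nz)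

lemma mult_le_one_cancel: "c \<le> 1 \<Longrightarrow> a * c \<le> a"
  using mult_mono_l[of c 1 a] by simp

lemma pw_zero_exp: "x \<noteq> 0 \<Longrightarrow> pw x 0 = 1"
proof -
  assume x: "x \<noteq> 0"
  have "pw x 0 = pw x 0 * pw x 0" using pw_add[OF x, of 0 0] by simp
  then have "inverse (pw x 0) * pw x 0 = inverse (pw x 0) * pw x 0 * pw x 0"
    by (simp add: mult.assoc)
  then show ?thesis using left_inverse_nz pw_nonzero[OF x] by simp
qed

lemma pw_neg: "x \<noteq> 0 \<Longrightarrow> pw x (- p) = inverse (pw x p)"
  by (rule inverse_unique) (metis pw_add pw_zero_exp add.right_inverse)

lemma pw_one_base: "pw 1 p = 1"
proof -
  have "pw 1 p = pw 1 p * pw 1 p" using pw_mult_base[of 1 1 p] by simp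
  then have "inverse (pw 1 p) * pw 1 p = inverse (pw 1 p) * pw 1 p * pw 1 p"
    by (simp add: mult.assoc)
  then show ?thesis using left_inverse_nz pw_nonzero[of 1] by simp
qed

lemma pw_le_cancel:
  assumes g: "g > 0" and le: "pw a g \<le> pw b g"
  shows "a \<le> b"
proof (cases "a = 0")
  case True then show ?thesis by simp
next
  case a: False
  show ?thesis
  proof (cases "b = 0")
    case True
    then have "pw a g \<le> 0" using le pw_zero_base[OF g] by simp
    then have "pw a g = 0" using order.antisym[OF _ zero_le'[of "pw a g"]] by simp
    then show ?thesis using pw_nonzero[OF a] by simp
  next
    case b: False
    have "pw (pw a g) (1/g) \<le> pw (pw b g) (1/g)" using pw_mono le g by simp
    then show ?thesis using a b g by (simp add: pw_pw pw_one)
  qed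
qed

lemma pw_le_one_cancel: "g > 0 \<Longrightarrow> pw y g \<le> 1 \<Longrightarrow> y \<le> 1"
  using pw_le_cancel[of g y 1] by (simp add: pw_one_base)

lemma inv_le_one_iff: "t \<noteq> 0 \<Longrightarrow> inverse t * x \<le> 1 \<longleftrightarrow> x \<le> t"
  using le_div_iff[of "inverse t" x 1] inverse_nz inverse_inverse'
  by (simp add: mult.commute)

end

lemma vle: "(x::'a::ord^'n) \<le> y \<longleftrightarrow> (\<forall>i. x$i \<le> y$i)"
  by (simp add: less_eq_vec_def)

lemma vadd_le_iff [simp]: "x + y \<le> (z::'a::idem_semifield^'n) \<longleftrightarrow> x \<le> z \<and> y \<le> z"
  by (auto simp: vle)

lemma vle_add1: "(x::'a::idem_semifield^'n) \<le> x + y"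
  by (simp add: vle le_add1')

lemma vle_add2: "(y::'a::idem_semifield^'n) \<le> x + y"
  by (simp add: vle le_add2')

lemma vsum_le_iff: "finite A \<Longrightarrow> sum f A \<le> (z::'a::idem_semifield^'n) \<longleftrightarrow> (\<forall>j\<in>A. f j \<le> z)"
  by (auto simp: vle sum_le_iff')

lemma vmember_le_sum: "finite A \<Longrightarrow> j \<in> A \<Longrightarrow> f j \<le> (sum f A :: 'a::idem_semifield^'n)"
  using vsum_le_iff[of A f "sum f A"] by auto

lemma rc_add_r: "rc r (x + y) = rc r x + rc r y"
  by (simp add: rc_def distrib_left sum.distrib)

lemma rc_add_l: "rc (x + y) c = rc x c + rc y c"
  by (simp add: rc_def distrib_right sum.distrib)

lemma rc_sum_l: "rc (sum f S) c = (\<Sum>j\<in>S. rc (f j) c)"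
  unfolding rc_def by (simp add: sum_distrib_right) (rule sum.swap)

lemma rc_sum_r: "rc r (sum f S) = (\<Sum>j\<in>S. rc r (f j))"
  unfolding rc_def by (simp add: sum_distrib_left) (rule sum.swap)

lemma rc_smult_l: "rc (a *s r) c = a * rc r c"
  by (simp add: rc_def vector_scalar_mult_def sum_distrib_left mult.assoc)

lemma rc_smult_r: "rc r (a *s c) = a * rc r c"
  by (simp add: rc_def vector_scalar_mult_def sum_distrib_left mult.left_commute)

lemma rc_mono_r: "c \<le> c' \<Longrightarrow> rc r c \<le> rc r c'"
  unfolding rc_def by (intro sum_mono') (simp add: vle mult_mono_l)

lemma rc_mono_l: "r \<le> r' \<Longrightarrow> rc r c \<le> rc r' c"
  unfolding rc_def by (intro sum_mono') (simp add: vle mult_mono_r)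

lemma rc_le_iff: "rc r c \<le> z \<longleftrightarrow> (\<forall>i. r$i * c$i \<le> z)"
  by (simp add: rc_def sum_le_iff')

lemma rc_mv: "rc r (A *v c) = rc (r v* A) c"
  unfolding rc_def matrix_vector_mult_def vector_matrix_mult_def
  by (simp add: sum_distrib_left sum_distrib_right mult.assoc mult.left_commute) (rule sum.swap)

lemma mv_mono_r: "x \<le> y \<Longrightarrow> (A::'a::idem_semifield^'n^'m) *v x \<le> A *v y"
  by (simp add: vle matrix_vector_mult_def sum_mono' mult_mono_l)

lemma mv_mono_l: "(A::'a::idem_semifield^'n^'m) \<le> A' \<Longrightarrow> A *v x \<le> A' *v x"
  by (simp add: vle matrix_vector_mult_def sum_mono' mult_mono_r)

lemma vm_mono_l: "(A::'a::idem_semifield^'n^'m) \<le> A' \<Longrightarrow> r v* A \<le> r v* A'"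
  by (simp add: vle vector_matrix_mult_def sum_mono' mult_mono_l)

lemma mv_smult: "A *v (c *s x) = c *s (A *v (x::'a::idem_semifield^'n))"
  by (simp add: vec_eq_iff matrix_vector_mult_def vector_scalar_mult_def sum_distrib_left
      mult.left_commute)

lemma mv_add_r: "A *v (x + y) = A *v x + A *v (y::'a::idem_semifield^'n)"
  by (simp add: vec_eq_iff matrix_vector_mult_def distrib_left sum.distrib)

lemma mv_sum_r: "A *v sum f S = (\<Sum>j\<in>S. A *v (f j :: 'a::idem_semifield^'n))"
  unfolding vec_eq_iff
proof
  fix i show "(A *v sum f S) $ i = (\<Sum>j\<in>S. A *v f j) $ i"
    by (simp add: matrix_vector_mult_def sum_distrib_left) (rule sum.swap)
qed

lemma mv_sum_l: "(sum F S) *v (x::'a::idem_semifield^'n) = (\<Sum>k\<in>S. F k *v x)"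
  unfolding vec_eq_iff
proof
  fix i show "(sum F S *v x) $ i = (\<Sum>k\<in>S. F k *v x) $ i"
    by (simp add: matrix_vector_mult_def sum_distrib_right) (rule sum.swap)
qed

lemma smult_mono_r: "x \<le> y \<Longrightarrow> c *s x \<le> c *s (y::'a::idem_semifield^'n)"
  by (simp add: vle vector_scalar_mult_def mult_mono_l)

lemma conj_reg: "regular x \<Longrightarrow> conj_vec x $ i = inverse (x $ i)"
  by (simp add: regular_def conj_vec_def)

lemma regular_conj: "regular x \<Longrightarrow> regular (conj_vec x)"
  by (simp add: regular_def conj_reg inverse_nz)

lemma regular_mono: "regular x \<Longrightarrow> x \<le> y \<Longrightarrow> regular y"
  unfolding regular_def vle by (metis order.antisym zero_le')

lemma rc_nz: "regular u \<Longrightarrow> regular v \<Longrightarrow> rc u v \<noteq> 0"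
proof
  fix i0
  assume u: "regular u" and v: "regular v" and z: "rc u v = 0"
  have "u $ i0 * v $ i0 \<le> rc u v" unfolding rc_def by (rule member_le_sum') auto
  then have le: "u $ i0 * v $ i0 \<le> 0" using z by simp
  have "u $ i0 * v $ i0 = 0" using order.antisym[OF le zero_le'] .
  then show False using u v by (simp add: regular_def mult_eq_0')
qed

lemma key1:
  assumes v: "regular v"
  shows "c * rc (conj_vec v) y \<le> 1 \<longleftrightarrow> c *s y \<le> v"
proof -
  have "c * rc (conj_vec v) y = (\<Sum>i\<in>UNIV. inverse (v$i) * (c * y$i))"
    by (simp add: rc_def sum_distrib_left conj_reg[OF v] mult.left_commute)
  moreover have "\<And>i. inverse (v$i) * (c * y$i) \<le> 1 \<longleftrightarrow> c * y$i \<le> v$i"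
    using v by (simp add: regular_def inv_le_one_iff)
  ultimately show ?thesis by (simp add: sum_le_iff' vle vector_scalar_mult_def)
qed

lemma key2:
  assumes v: "regular v"
  shows "rc v u \<le> 1 \<longleftrightarrow> u \<le> conj_vec v"
proof -
  have "\<And>i. v$i * u$i \<le> 1 \<longleftrightarrow> u$i \<le> inverse (v$i)"
    using v le_div_iff[of "v$i" "u$i" 1 for i] by (simp add: regular_def mult.commute)
  then show ?thesis by (simp add: rc_le_iff vle conj_reg[OF v])
qed

lemma le_rc_smult:
  assumes x: "regular x"
  shows "y \<le> rc (conj_vec x) y *s x"
  unfolding vle
proof
  fix i
  have x0: "x$i \<noteq> 0" using x by (simp add: regular_def)
  have "inverse (x$i) * y$i \<le> rc (conj_vec x) y"
    unfolding rc_def conj_reg[OF x] by (rule member_le_sum'[where f="\<lambda>i. inverse (x$i) * y$i"]) auto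
  then have "inverse (x$i) * y$i * x$i \<le> rc (conj_vec x) y * x$i" by (rule mult_mono_r)
  moreover have "inverse (x$i) * y$i * x$i = y$i"
  proof -
    have "inverse (x$i) * y$i * x$i = (inverse (x$i) * x$i) * y$i" by (simp add: ac_simps)
    also have "\<dots> = y$i" using x0 by (simp add: left_inverse_nz)
    finally show ?thesis .
  qed
  ultimately show "y$i \<le> (rc (conj_vec x) y *s x) $ i"
    by (simp add: vector_scalar_mult_def)
qed

lemma mle: "(A::'a::ord^'n^'m) \<le> A' \<longleftrightarrow> (\<forall>i j. A$i$j \<le> A'$i$j)"
  by (simp add: vle)

lemma kstar_entry: "kstar B $ i $ j = (\<Sum>k\<in>{0..<CARD('n)}. mpow (B::'a::idem_semifield^'n^'n) k $ i $ j)"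
  by (simp add: kstar_def)

lemma mpow_le_kstar: "k < CARD('n) \<Longrightarrow> mpow (B::'a::idem_semifield^'n^'n) k \<le> kstar B"
  unfolding mle kstar_entry by (auto intro: member_le_sum')

lemma kstar_ge: "x \<le> kstar (B::'a::idem_semifield^'n^'n) *v x"
proof -
  have "mat 1 \<le> kstar B" using mpow_le_kstar[of 0 B] by simp
  then have "mat 1 *v x \<le> kstar B *v x" by (rule mv_mono_l)
  then show ?thesis by simp
qed

lemma mpow_le: "B *v x \<le> x \<Longrightarrow> mpow (B::'a::idem_semifield^'n^'n) k *v x \<le> x"
proof (induction k)
  case 0 then show ?case by simp
next
  case (Suc k)
  have "mpow B (Suc k) *v x = B *v (mpow B k *v x)" by (simp add: matrix_vector_mul_assoc)
  also have "\<dots> \<le> B *v x" using Suc by (intro mv_mono_r) simp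
  also have "\<dots> \<le> x" using Suc by simp
  finally show ?case .
qed

lemma kstar_le: "B *v x \<le> x \<Longrightarrow> kstar (B::'a::idem_semifield^'n^'n) *v x \<le> x"
  unfolding kstar_def mv_sum_l by (simp add: vsum_le_iff mpow_le)

lemma kstar_fix: "B *v x \<le> x \<Longrightarrow> kstar (B::'a::idem_semifield^'n^'n) *v x = x"
  using kstar_le kstar_ge order.antisym by blast

lemma mpow_suc_entry:
  "mpow (B::'a::idem_semifield^'n^'n) (Suc m) $ i $ k = (\<Sum>l\<in>UNIV. B$i$l * mpow B m $ l $ k)"
  by (simp add: matrix_matrix_mult_def)

lemma walk_attain:
  "mpow (B::'a::idem_semifield^'n^'n) m $ i $ k = 0 \<or>
   (\<exists>v. v 0 = i \<and> v m = k \<and> mpow B m $ i $ k = (\<Prod>t<m. B $ v t $ v (Suc t)))"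
proof (induction m arbitrary: i)
  case 0
  show ?case
  proof (cases "i = k")
    case True
    then show ?thesis by (intro disjI2 exI[of _ "\<lambda>_. i"]) (simp add: mat_def)
  qed (simp add: mat_def)
next
  case (Suc m)
  obtain l where l0: "(\<Sum>l\<in>UNIV. B$i$l * mpow B m $ l $ k) = B$i$l * mpow B m $ l $ k"
    using sum_attained[OF finite UNIV_not_empty, of "\<lambda>l. B$i$l * mpow B m $ l $ k"] by blast
  have l: "mpow B (Suc m) $ i $ k = B$i$l * mpow B m $ l $ k"
    using l0 by (simp only: mpow_suc_entry)
  from Suc.IH[of l] show ?case
  proof
    assume "mpow B m $ l $ k = 0"
    then show ?thesis using l by simp
  next
    assume "\<exists>v. v 0 = l \<and> v m = k \<and> mpow B m $ l $ k = (\<Prod>t<m. B $ v t $ v (Suc t))"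
    then obtain v where v: "v 0 = l" "v m = k" "mpow B m $ l $ k = (\<Prod>t<m. B $ v t $ v (Suc t))"
      by blast
    define v' where "v' = (\<lambda>t. case t of 0 \<Rightarrow> i | Suc t' \<Rightarrow> v t')"
    have "(\<Prod>t<Suc m. B $ v' t $ v' (Suc t)) = B $ i $ l * (\<Prod>t<m. B $ v t $ v (Suc t))"
      unfolding prod.lessThan_Suc_shift by (simp add: v'_def v)
    then show ?thesis using l v
      by (intro disjI2 exI[of _ v']) (simp add: v'_def)
  qed
qed

lemma walk_le:
  "v 0 = i \<Longrightarrow> v m = k \<Longrightarrow> (\<Prod>t<m. B $ v t $ v (Suc t)) \<le> mpow (B::'a::idem_semifield^'n^'n) m $ i $ k"
proof (induction m arbitrary: i v)
  case 0 then show ?case by (simp add: mat_def)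
next
  case (Suc m)
  have "(\<Prod>t<Suc m. B $ v t $ v (Suc t)) = B $ i $ v 1 * (\<Prod>t<m. B $ v (Suc t) $ v (Suc (Suc t)))"
    unfolding prod.lessThan_Suc_shift using Suc.prems by simp
  also have "\<dots> \<le> B $ i $ v 1 * mpow B m $ v 1 $ k"
    using Suc.IH[of "\<lambda>t. v (Suc t)" "v 1"] Suc.prems by (intro mult_mono_l) simp
  also have "\<dots> \<le> mpow B (Suc m) $ i $ k"
    unfolding mpow_suc_entry by (rule member_le_sum'[where f="\<lambda>l. B$i$l * mpow B m $ l $ k"]) auto
  finally show ?case .
qed

lemma mpow_card:
  fixes B :: "'a::idem_semifield^'n^'n"
  assumes tr: "Tr B \<le> 1"
  shows "mpow B CARD('n) $ i $ k \<le> kstar B $ i $ k"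
proof -
  let ?N = "CARD('n)"
  from walk_attain[of B ?N i k] show ?thesis
  proof
    assume "mpow B ?N $ i $ k = 0" then show ?thesis by simp
  next
    assume "\<exists>v. v 0 = i \<and> v ?N = k \<and> mpow B ?N $ i $ k = (\<Prod>t<?N. B $ v t $ v (Suc t))"
    then obtain v where v0: "v 0 = i" and vN: "v ?N = k"
      and P: "mpow B ?N $ i $ k = (\<Prod>t<?N. B $ v t $ v (Suc t))" by blast
    define e where "e = (\<lambda>t. B $ v t $ v (Suc t))"
    have "\<not> inj_on v {0..?N}"
    proof
      assume "inj_on v {0..?N}"
      then have "card (v ` {0..?N}) = Suc ?N" by (simp add: card_image)
      moreover have "card (v ` {0..?N}) \<le> ?N" by (rule card_mono) auto
      ultimately show False by simp
    qed
    then obtain a b where ab: "a < b" "b \<le> ?N" "v a = v b"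
    proof -
      obtain x y where xy: "x \<in> {0..?N}" "y \<in> {0..?N}" "x \<noteq> y" "v x = v y"
        using \<open>\<not> inj_on v {0..?N}\<close> unfolding inj_on_def by blast
      show ?thesis
      proof (cases "x < y")
        case True then show ?thesis using xy that[of x y] by auto
      next
        case False then have "y < x" using xy by simp
        then show ?thesis using xy that[of y x] by auto
      qed
    qed
    define c where "c = b - a"
    have c: "1 \<le> c" "c \<le> ?N" "b = a + c" using ab by (auto simp: c_def)
    have split: "(\<Prod>t<?N. e t) = (\<Prod>t\<in>{0..<a}. e t) * (\<Prod>t\<in>{a..<b}. e t) * (\<Prod>t\<in>{b..<?N}. e t)"
    proof -
      have "(\<Prod>t<?N. e t) = (\<Prod>t\<in>{0..<?N}. e t)" by (simp add: atLeast0LessThan)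
      also have "\<dots> = (\<Prod>t\<in>{0..<b}. e t) * (\<Prod>t\<in>{b..<?N}. e t)"
        using ab by (intro prod.atLeastLessThan_concat[symmetric]) auto
      also have "(\<Prod>t\<in>{0..<b}. e t) = (\<Prod>t\<in>{0..<a}. e t) * (\<Prod>t\<in>{a..<b}. e t)"
        using ab by (intro prod.atLeastLessThan_concat[symmetric]) auto
      finally show ?thesis .
    qed
    have C1: "(\<Prod>t\<in>{a..<b}. e t) = (\<Prod>t<c. B $ v (t + a) $ v (Suc t + a))"
      using prod.shift_bounds_nat_ivl[of e 0 a c] c by (simp add: e_def atLeast0LessThan add.commute)
    have C2: "(\<Prod>t<c. B $ v (t + a) $ v (Suc t + a)) \<le> mpow B c $ v a $ v a"
      using walk_le[of "\<lambda>t. v (t + a)" "v a" c "v a" B] ab c by (simp add: add.commute)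
    have C3: "mpow B c $ v a $ v a \<le> mtr (mpow B c)"
      unfolding mtr_def by (rule member_le_sum'[where f="\<lambda>i. mpow B c $ i $ i"]) auto
    have C4: "mtr (mpow B c) \<le> Tr B"
      unfolding Tr_def by (rule member_le_sum'[where f="\<lambda>k. mtr (mpow B k)"]) (use c in auto)
    have Cle: "(\<Prod>t\<in>{a..<b}. e t) \<le> 1"
      unfolding C1 using C2 C3 C4 tr by (meson order_trans)
    define v' where "v' = (\<lambda>t. if t \<le> a then v t else v (t + c))"
    have aN: "a \<le> ?N - c" using c ab by simp
    have v'0: "v' 0 = i" using v0 by (simp add: v'_def)
    have v'N: "v' (?N - c) = k"
    proof (cases "?N - c \<le> a")
      case True then have "?N - c = a" using aN by simp
      then have "a + c = ?N" using c by simp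
      have "v' (?N - c) = v' a" using \<open>?N - c = a\<close> by (rule arg_cong)
      also have "\<dots> = v b" using ab by (simp add: v'_def)
      also have "b = ?N" using c \<open>a + c = ?N\<close> by linarith
      finally show ?thesis using vN by simp
    next
      case False then show ?thesis using c vN by (simp add: v'_def)
    qed
    have R1: "(\<Prod>t\<in>{0..<a}. B $ v' t $ v' (Suc t)) = (\<Prod>t\<in>{0..<a}. e t)"
      by (rule prod.cong) (auto simp: v'_def e_def)
    have R2: "(\<Prod>t\<in>{a..<?N - c}. B $ v' t $ v' (Suc t)) = (\<Prod>t\<in>{a..<?N - c}. e (t + c))"
    proof (rule prod.cong)
      fix t assume t: "t \<in> {a..<?N - c}"
      have "v' t = v (t + c)" using t ab c by (auto simp: v'_def)
      moreover have "v' (Suc t) = v (Suc t + c)" using t by (auto simp: v'_def)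
      ultimately show "B $ v' t $ v' (Suc t) = e (t + c)" by (simp add: e_def)
    qed simp
    have R3: "(\<Prod>t\<in>{a..<?N - c}. e (t + c)) = (\<Prod>t\<in>{b..<?N}. e t)"
      using prod.shift_bounds_nat_ivl[of e a c "?N - c"] c by simp
    have R: "(\<Prod>t<?N - c. B $ v' t $ v' (Suc t)) = (\<Prod>t\<in>{0..<a}. e t) * (\<Prod>t\<in>{b..<?N}. e t)"
    proof -
      have "(\<Prod>t<?N - c. B $ v' t $ v' (Suc t)) = (\<Prod>t\<in>{0..<?N - c}. B $ v' t $ v' (Suc t))"
        by (simp add: atLeast0LessThan)
      also have "\<dots> = (\<Prod>t\<in>{0..<a}. B $ v' t $ v' (Suc t)) * (\<Prod>t\<in>{a..<?N - c}. B $ v' t $ v' (Suc t))"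
        using aN by (intro prod.atLeastLessThan_concat[symmetric]) auto
      finally show ?thesis unfolding R1 R2 R3 .
    qed
    have "mpow B ?N $ i $ k = (\<Prod>t\<in>{0..<a}. e t) * (\<Prod>t\<in>{b..<?N}. e t) * (\<Prod>t\<in>{a..<b}. e t)"
      using P split by (simp add: e_def ac_simps)
    also have "\<dots> \<le> (\<Prod>t\<in>{0..<a}. e t) * (\<Prod>t\<in>{b..<?N}. e t)"
      using Cle by (rule mult_le_one_cancel)
    also have "\<dots> \<le> mpow B (?N - c) $ i $ k"
      using walk_le[of v' i "?N - c" k B] v'0 v'N R by simp
    also have "\<dots> \<le> kstar B $ i $ k"
      using mpow_le_kstar[of "?N - c" B] c by (simp add: mle)
    finally show ?thesis .
  qed
qed

lemma B_kstar:
  fixes B :: "'a::idem_semifield^'n^'n"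
  assumes tr: "Tr B \<le> 1"
  shows "B ** kstar B \<le> kstar B"
  unfolding mle
proof (intro allI)
  fix i k
  let ?K = "{0..<CARD('n)}"
  have "(B ** kstar B) $ i $ k = (\<Sum>l\<in>UNIV. B$i$l * (\<Sum>k'\<in>?K. mpow B k' $ l $ k))"
    by (simp add: matrix_matrix_mult_def kstar_entry)
  also have "\<dots> = (\<Sum>k'\<in>?K. \<Sum>l\<in>UNIV. B$i$l * mpow B k' $ l $ k)"
    by (simp add: sum_distrib_left) (rule sum.swap)
  also have "\<dots> = (\<Sum>k'\<in>?K. mpow B (Suc k') $ i $ k)"
    by (simp only: mpow_suc_entry)
  also have "\<dots> \<le> kstar B $ i $ k"
  proof (subst sum_le_iff', simp, intro ballI)
    fix k' assume k': "k' \<in> ?K"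
    show "mpow B (Suc k') $ i $ k \<le> kstar B $ i $ k"
    proof (cases "Suc k' < CARD('n)")
      case True then show ?thesis using mpow_le_kstar[of "Suc k'" B] by (simp add: mle)
    next
      case False then have "Suc k' = CARD('n)" using k' by simp
      then show ?thesis using mpow_card[OF tr] by simp
    qed
  qed
  finally show "(B ** kstar B) $ i $ k \<le> kstar B $ i $ k" .
qed

lemma B_kstar_mv:
  fixes B :: "'a::idem_semifield^'n^'n"
  assumes tr: "Tr B \<le> 1"
  shows "B *v (kstar B *v u) \<le> kstar B *v u"
  using mv_mono_l[OF B_kstar[OF tr]] by (simp add: matrix_vector_mul_assoc)

lemma one_smult: "1 *s (y::'a::idem_semifield^'n) = y"
  by (simp add: vec_eq_iff vector_scalar_mult_def)

lemma le_conj_iff: "regular v \<Longrightarrow> rc (conj_vec v) y \<le> 1 \<longleftrightarrow> y \<le> v"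
  using key1[of v 1 y] by (simp add: one_smult)

lemma fam:
  fixes p :: "'m::finite \<Rightarrow> 'a::idem_semifield^'n" and c :: "'m \<Rightarrow> 'a"
  assumes x: "regular x"
  shows "(\<forall>j. c j * (rc (conj_vec (p j)) x + rc (conj_vec x) (p j)) \<le> 1) \<longleftrightarrow>
         ((\<Sum>j\<in>UNIV. c j *s p j) \<le> x \<and> rc (\<Sum>j\<in>UNIV. c j *s conj_vec (p j)) x \<le> 1)"
proof -
  have "rc (\<Sum>j\<in>UNIV. c j *s conj_vec (p j)) x = (\<Sum>j\<in>UNIV. c j * rc (conj_vec (p j)) x)"
    by (simp add: rc_sum_l rc_smult_l)
  then show ?thesis using key1[OF x] by (auto simp: distrib_left vsum_le_iff sum_le_iff')
qed

lemma pw_le_one_iff: "w > 0 \<Longrightarrow> pw y w \<le> 1 \<longleftrightarrow> (y::'a::idem_semifield) \<le> 1"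
  using pw_le_one_cancel[of w y] pw_mono[of w y 1] by (auto simp: pw_one_base)

lemma pw_inv: "t \<noteq> 0 \<Longrightarrow> pw (t::'a::idem_semifield) (-1) = inverse t"
  using pw_neg[of t 1] by (simp add: pw_one)

lemma pw_scale:
  fixes t h R :: "'a::idem_semifield"
  assumes t: "t \<noteq> 0" and h: "h \<noteq> 0" and w: "w > 0" and R: "R \<noteq> 0"
  shows "h * pw R w \<le> t \<longleftrightarrow> (pw t (-1/w) * pw h (1/w)) * R \<le> 1"
proof -
  let ?a = "pw t (-1/w) * pw h (1/w)"
  have a0: "?a \<noteq> 0" using t h by (simp add: pw_nonzero mult_nonzero)
  have "pw (?a * R) w = pw ?a w * pw R w" using a0 R by (rule pw_mult_base)
  also have "pw ?a w = pw (pw t (-1/w)) w * pw (pw h (1/w)) w"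
    using t h by (simp add: pw_nonzero pw_mult_base)
  also have "\<dots> = pw t (-1) * pw h 1" using t h w by (simp add: pw_pw)
  also have "\<dots> = inverse t * h" using t by (simp add: pw_inv pw_one)
  finally have e: "pw (?a * R) w = inverse t * (h * pw R w)" by (simp add: mult.assoc)
  have "?a * R \<le> 1 \<longleftrightarrow> pw (?a * R) w \<le> 1" using w by (simp add: pw_le_one_iff)
  also have "\<dots> \<longleftrightarrow> h * pw R w \<le> t" unfolding e using t by (rule inv_le_one_iff)
  finally show ?thesis by simp
qed

lemma termA_lower:
  fixes F hj hl Rj Rl P :: "'a::idem_semifield"
  assumes F0: "F \<noteq> 0" and hj: "hj \<noteq> 0" and hl: "hl \<noteq> 0" and Rj: "Rj \<noteq> 0" and Rl: "Rl \<noteq> 0"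
    and wj: "wj > 0" and wl: "wl > 0"
    and Xj: "hj * pw Rj wj \<le> F" and Xl: "hl * pw Rl wl \<le> F" and P: "P \<le> Rj * Rl"
  shows "pw hj (wl/(wj+wl)) * pw hl (wj/(wj+wl)) * pw P (wj*wl/(wj+wl)) \<le> F"
proof -
  let ?al = "wl/(wj+wl)" and ?be = "wj/(wj+wl)" and ?ga = "wj*wl/(wj+wl)"
  have pos: "?al > 0" "?be > 0" "?ga > 0" using wj wl by auto
  have ga1: "wj * ?al = ?ga" "wl * ?be = ?ga" by (simp_all add: field_simps)
  have "pw P ?ga \<le> pw (Rj * Rl) ?ga" using pos P by (intro pw_mono)
  also have "\<dots> = pw Rj ?ga * pw Rl ?ga" using Rj Rl by (rule pw_mult_base)
  finally have "pw hj ?al * pw hl ?be * pw P ?ga \<le> pw hj ?al * pw hl ?be * (pw Rj ?ga * pw Rl ?ga)"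
    by (rule mult_mono_l)
  also have "\<dots> = pw (hj * pw Rj wj) ?al * pw (hl * pw Rl wl) ?be"
    using hj hl Rj Rl by (simp add: pw_mult_base pw_nonzero pw_pw ga1 ac_simps)
  also have "\<dots> \<le> pw F ?al * pw F ?be" using pos Xj Xl by (intro mult_mono2 pw_mono)
  also have "\<dots> = pw F (?al + ?be)" using F0 by (simp add: pw_add)
  also have "?al + ?be = 1"
  proof -
    have "wj + wl \<noteq> 0" using wj wl by simp
    have "?al + ?be = (wl + wj)/(wj+wl)" by (simp add: add_divide_distrib)
    also have "\<dots> = 1" using \<open>wj + wl \<noteq> 0\<close> by (simp add: add.commute)
    finally show ?thesis .
  qed
  finally show ?thesis by (simp add: pw_one)
qed

lemma termA_exist:
  fixes t hj hl P :: "'a::idem_semifield"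
  assumes t: "t \<noteq> 0" and hj: "hj \<noteq> 0" and hl: "hl \<noteq> 0" and wj: "wj > 0" and wl: "wl > 0"
    and T: "pw hj (wl/(wj+wl)) * pw hl (wj/(wj+wl)) * pw P (wj*wl/(wj+wl)) \<le> t"
  shows "(pw t (-1/wj) * pw hj (1/wj)) * ((pw t (-1/wl) * pw hl (1/wl)) * P) \<le> 1"
proof (cases "P = 0")
  case True then show ?thesis by simp
next
  case P: False
  let ?al = "wl/(wj+wl)" and ?be = "wj/(wj+wl)" and ?ga = "wj*wl/(wj+wl)"
  let ?aj = "pw t (-1/wj) * pw hj (1/wj)" and ?al' = "pw t (-1/wl) * pw hl (1/wl)"
  have pos: "?ga > 0" using wj wl by auto
  have aj0: "?aj \<noteq> 0" "?al' \<noteq> 0" using t hj hl by (simp_all add: pw_nonzero mult_nonzero)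
  have ex: "-1/wj * ?ga = - ?al" "1/wj * ?ga = ?al" "-1/wl * ?ga = - ?be" "1/wl * ?ga = ?be"
    using wj wl by (simp_all add: field_simps)
  have "pw (?aj * (?al' * P)) ?ga = pw ?aj ?ga * (pw ?al' ?ga * pw P ?ga)"
    using aj0 P by (simp add: pw_mult_base mult_nonzero)
  also have "pw ?aj ?ga = pw t (- ?al) * pw hj ?al"
  proof -
    have "pw ?aj ?ga = pw (pw t (-1/wj)) ?ga * pw (pw hj (1/wj)) ?ga"
      using t hj by (simp add: pw_mult_base pw_nonzero)
    also have "\<dots> = pw t (-1/wj * ?ga) * pw hj (1/wj * ?ga)" by (simp only: pw_pw[OF t] pw_pw[OF hj])
    finally show ?thesis unfolding ex .
  qed
  also have "pw ?al' ?ga = pw t (- ?be) * pw hl ?be"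
  proof -
    have "pw ?al' ?ga = pw (pw t (-1/wl)) ?ga * pw (pw hl (1/wl)) ?ga"
      using t hl by (simp add: pw_mult_base pw_nonzero)
    also have "\<dots> = pw t (-1/wl * ?ga) * pw hl (1/wl * ?ga)" by (simp only: pw_pw[OF t] pw_pw[OF hl])
    finally show ?thesis unfolding ex .
  qed
  also have "pw t (- ?al) * pw hj ?al * (pw t (- ?be) * pw hl ?be * pw P ?ga)
      = (pw t (- ?al) * pw t (- ?be)) * (pw hj ?al * pw hl ?be * pw P ?ga)" by (simp add: ac_simps)
  also have "pw t (- ?al) * pw t (- ?be) = pw t (-1)"
  proof -
    have "pw t (- ?al) * pw t (- ?be) = pw t (- ?al + - ?be)" by (rule pw_add[OF t, symmetric])
    also have "- ?al + - ?be = -1"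
    proof -
      have "wj + wl \<noteq> 0" using wj wl by simp
      have "- ?al + - ?be = - ((wl + wj)/(wj+wl))" by (simp add: add_divide_distrib)
      also have "\<dots> = -1" using \<open>wj + wl \<noteq> 0\<close> by (simp add: add.commute)
      finally show ?thesis .
    qed
    finally show ?thesis .
  qed
  also have "pw t (-1) = inverse t" using t by (rule pw_inv)
  finally have e: "pw (?aj * (?al' * P)) ?ga = inverse t * (pw hj ?al * pw hl ?be * pw P ?ga)" .
  have "inverse t * (pw hj ?al * pw hl ?be * pw P ?ga) \<le> 1" using T t by (simp add: inv_le_one_iff)
  then have "pw (?aj * (?al' * P)) ?ga \<le> 1" using e by simp
  then show ?thesis using pw_le_one_iff[OF pos] by blast
qed

theorem theorem2:
  fixes p :: "'m::finite \<Rightarrow> 'a::idem_semifield ^ 'n"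
    and w :: "'m \<Rightarrow> real"
    and h d :: "'m \<Rightarrow> 'a"
    and B :: "'a ^ 'n ^ 'n"
    and f g :: "'a ^ 'n"
  assumes p_reg: "\<And>j. regular (p j)"
    and w_pos: "\<And>j. w j > 0"
    and h_nz: "\<And>j. h j \<noteq> 0"
    and d_nz: "\<And>j. d j \<noteq> 0"
    and f_reg: "regular f" and g_reg: "regular g" and fg: "f \<le> g"
  defines "F \<equiv> \<lambda>x. \<Sum>j\<in>UNIV. h j * pw (rc (conj_vec (p j)) x + rc (conj_vec x) (p j)) (w j)"
    and "feasible \<equiv> \<lambda>x. regular x
           \<and> (\<forall>j. rc (conj_vec (p j)) x + rc (conj_vec x) (p j) \<le> d j)
           \<and> B *v x \<le> x \<and> f \<le> x \<and> x \<le> g"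
    and "Bs \<equiv> kstar B"
    and "s \<equiv> (\<Sum>j\<in>UNIV. inverse (d j) *s p j) + f"
    and "tm \<equiv> (\<Sum>j\<in>UNIV. inverse (d j) *s conj_vec (p j)) + conj_vec g"
  defines "\<theta> \<equiv> \<Sum>j\<in>UNIV. \<Sum>l\<in>UNIV.
              pw (h j) (w l / (w j + w l)) * pw (h l) (w j / (w j + w l))
                * pw (rc (conj_vec (p j)) (Bs *v p l)) (w j * w l / (w j + w l))
              + h j * pw (rc (conj_vec (p j)) (Bs *v s)) (w j)
              + h l * pw (rc tm (Bs *v p l)) (w l)"
  defines "q \<equiv> \<Sum>j\<in>UNIV. (pw \<theta> (- 1 / w j) * pw (h j) (1 / w j)) *s p j"
    and "rm \<equiv> \<Sum>j\<in>UNIV. (pw \<theta> (- 1 / w j) * pw (h j) (1 / w j)) *s conj_vec (p j)"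
  assumes tr: "Tr B \<le> 1"
    and ts: "rc tm (Bs *v s) \<le> 1"
  shows "(\<exists>x. feasible x \<and> F x = \<theta>) \<and> (\<forall>x. feasible x \<longrightarrow> \<theta> \<le> F x)
         \<and> {x. feasible x \<and> F x = \<theta>}
             = {Bs *v u | u. q + s \<le> u \<and> u \<le> conj_vec ((rm + tm) v* Bs)}"
proof -
  have regs: "regular s"
    using f_reg unfolding s_def by (rule regular_mono) (rule vle_add2)
  have regtm: "regular tm"
    using regular_conj[OF g_reg] unfolding tm_def by (rule regular_mono) (rule vle_add2)
  have Bs_ge: "\<And>x. x \<le> Bs *v x" unfolding Bs_def by (rule kstar_ge)
  have Bs_fix: "\<And>x. B *v x \<le> x \<Longrightarrow> Bs *v x = x" unfolding Bs_def by (rule kstar_fix)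
  have Bs_B: "\<And>u. B *v (Bs *v u) \<le> Bs *v u" unfolding Bs_def by (rule B_kstar_mv[OF tr])
  define R where "R = (\<lambda>j x. rc (conj_vec (p j)) x + rc (conj_vec x) (p j))"
  have R_nz: "R j x \<noteq> 0" if x: "regular x" for j x
  proof
    assume "R j x = 0"
    moreover have "rc (conj_vec (p j)) x \<le> R j x" unfolding R_def by (rule le_add1')
    ultimately have "rc (conj_vec (p j)) x \<le> 0" by simp
    then have "rc (conj_vec (p j)) x = 0" using order.antisym zero_le' by blast
    then show False using rc_nz[OF regular_conj[OF p_reg] x] by simp
  qed
  have feas_iff: "feasible x \<longleftrightarrow> regular x \<and> B *v x \<le> x \<and> s \<le> x \<and> rc tm x \<le> 1" for x
  proof (cases "regular x")
    case False then show ?thesis unfolding feasible_def by simp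
  next
    case x: True
    have d1: "(\<forall>j. R j x \<le> d j) \<longleftrightarrow> (\<forall>j. inverse (d j) * R j x \<le> 1)"
      using d_nz by (simp add: inv_le_one_iff)
    have d2: "(\<forall>j. inverse (d j) * R j x \<le> 1) \<longleftrightarrow>
        ((\<Sum>j\<in>UNIV. inverse (d j) *s p j) \<le> x \<and> rc (\<Sum>j\<in>UNIV. inverse (d j) *s conj_vec (p j)) x \<le> 1)"
      unfolding R_def by (rule fam[OF x])
    have g1: "x \<le> g \<longleftrightarrow> rc (conj_vec g) x \<le> 1" using le_conj_iff[OF g_reg] by simp
    show ?thesis using x d1 d2 g1 unfolding feasible_def s_def tm_def R_def
      by (auto simp: rc_add_l)
  qed
  define Ta where "Ta j l = pw (h j) (w l / (w j + w l)) * pw (h l) (w j / (w j + w l))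
                * pw (rc (conj_vec (p j)) (Bs *v p l)) (w j * w l / (w j + w l))" for j l
  define Tb where "Tb j = h j * pw (rc (conj_vec (p j)) (Bs *v s)) (w j)" for j
  define Tc where "Tc l = h l * pw (rc tm (Bs *v p l)) (w l)" for l
  have th_eq: "\<theta> = (\<Sum>j\<in>UNIV. \<Sum>l\<in>UNIV. Ta j l + Tb j + Tc l)"
    unfolding \<theta>_def Ta_def Tb_def Tc_def ..
  have terms: "Ta j l \<le> \<theta> \<and> Tb j \<le> \<theta> \<and> Tc l \<le> \<theta>" for j l
  proof -
    have "Ta j l + Tb j + Tc l \<le> (\<Sum>l\<in>UNIV. Ta j l + Tb j + Tc l)"
      by (rule member_le_sum'[where f="\<lambda>l. Ta j l + Tb j + Tc l"]) auto
    also have "\<dots> \<le> \<theta>" unfolding th_eq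
      by (rule member_le_sum'[where f="\<lambda>j. \<Sum>l\<in>UNIV. Ta j l + Tb j + Tc l"]) auto
    finally show ?thesis by simp
  qed
  have regBss: "regular (Bs *v s)" using regs Bs_ge by (rule regular_mono)
  have Q_nz: "rc (conj_vec (p j)) (Bs *v s) \<noteq> 0" for j
    using rc_nz[OF regular_conj[OF p_reg] regBss] .
  have th0: "\<theta> \<noteq> 0"
  proof
    assume "\<theta> = 0"
    then have "Tb undefined \<le> 0" using terms by metis
    then have "Tb undefined = 0" using order.antisym zero_le' by blast
    then show False using h_nz Q_nz unfolding Tb_def by (simp add: mult_eq_0' pw_nonzero)
  qed
  define a where "a j = pw \<theta> (- 1 / w j) * pw (h j) (1 / w j)" for j
  have q_eq: "q = (\<Sum>j\<in>UNIV. a j *s p j)" unfolding q_def a_def ..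
  have rm_eq: "rm = (\<Sum>j\<in>UNIV. a j *s conj_vec (p j))" unfolding rm_def a_def ..
  have Fle_iff: "F x \<le> \<theta> \<longleftrightarrow> q \<le> x \<and> rc rm x \<le> 1" if x: "regular x" for x
  proof -
    have "F x \<le> \<theta> \<longleftrightarrow> (\<forall>j. h j * pw (R j x) (w j) \<le> \<theta>)"
      unfolding F_def R_def by (simp add: sum_le_iff')
    also have "\<dots> \<longleftrightarrow> (\<forall>j. a j * R j x \<le> 1)"
      unfolding a_def using pw_scale[OF th0 h_nz w_pos R_nz[OF x]] by simp
    also have "\<dots> \<longleftrightarrow> q \<le> x \<and> rc rm x \<le> 1"
      unfolding q_eq rm_eq R_def by (rule fam[OF x])
    finally show ?thesis .
  qed
  have lower: "\<theta> \<le> F x" if fx: "feasible x" for x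
  proof -
    have x: "regular x" and Bx: "B *v x \<le> x" and sx: "s \<le> x" and tx: "rc tm x \<le> 1"
      using fx feas_iff by auto
    have Bsx: "Bs *v x = x" using Bx by (rule Bs_fix)
    have X: "h j * pw (R j x) (w j) \<le> F x" for j
      unfolding F_def R_def by (rule member_le_sum'[where f="\<lambda>j. h j * pw (rc (conj_vec (p j)) x + rc (conj_vec x) (p j)) (w j)"]) auto
    have F0: "F x \<noteq> 0"
    proof
      assume "F x = 0"
      then have "h undefined * pw (R undefined x) (w undefined) \<le> 0" using X by metis
      then have "h undefined * pw (R undefined x) (w undefined) = 0" using order.antisym zero_le' by blast
      then show False using h_nz R_nz[OF x] by (simp add: mult_eq_0' pw_nonzero)
    qed
    have pl: "Bs *v p l \<le> rc (conj_vec x) (p l) *s x" for l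
    proof -
      have "Bs *v p l \<le> Bs *v (rc (conj_vec x) (p l) *s x)" by (rule mv_mono_r[OF le_rc_smult[OF x]])
      then show ?thesis by (simp add: mv_smult Bsx)
    qed
    have Rge: "rc (conj_vec (p j)) x \<le> R j x" "rc (conj_vec x) (p j) \<le> R j x" for j
      unfolding R_def by (simp_all add: le_add1' le_add2')
    have A: "Ta j l \<le> F x" for j l
    proof -
      have "rc (conj_vec (p j)) (Bs *v p l) \<le> rc (conj_vec (p j)) (rc (conj_vec x) (p l) *s x)"
        by (rule rc_mono_r[OF pl])
      also have "\<dots> = rc (conj_vec x) (p l) * rc (conj_vec (p j)) x" by (rule rc_smult_r)
      also have "\<dots> \<le> R l x * R j x" by (intro mult_mono2 Rge)
      finally have P: "rc (conj_vec (p j)) (Bs *v p l) \<le> R j x * R l x" by (simp add: mult.commute)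
      show ?thesis unfolding Ta_def
        by (rule termA_lower[OF F0 h_nz h_nz R_nz[OF x] R_nz[OF x] w_pos w_pos X X P])
    qed
    have Bt: "Tb j \<le> F x" for j
    proof -
      have "rc (conj_vec (p j)) (Bs *v s) \<le> rc (conj_vec (p j)) (Bs *v x)"
        by (intro rc_mono_r mv_mono_r sx)
      also have "\<dots> \<le> R j x" using Rge by (simp add: Bsx)
      finally have "Tb j \<le> h j * pw (R j x) (w j)" unfolding Tb_def
        using w_pos by (intro mult_mono_l pw_mono)
      then show ?thesis using X order_trans by blast
    qed
    have Ct: "Tc l \<le> F x" for l
    proof -
      have "rc tm (Bs *v p l) \<le> rc tm (rc (conj_vec x) (p l) *s x)" by (rule rc_mono_r[OF pl])
      also have "\<dots> = rc (conj_vec x) (p l) * rc tm x" by (rule rc_smult_r)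
      also have "\<dots> \<le> rc (conj_vec x) (p l) * 1" using tx by (rule mult_mono_l)
      also have "\<dots> \<le> R l x" using Rge by simp
      finally have "Tc l \<le> h l * pw (R l x) (w l)" unfolding Tc_def
        using w_pos by (intro mult_mono_l pw_mono)
      then show ?thesis using X order_trans by blast
    qed
    show ?thesis unfolding th_eq using A Bt Ct by (simp add: sum_le_iff')
  qed
  define P where "P = {x. regular x \<and> B *v x \<le> x \<and> q + s \<le> x \<and> rc (rm + tm) x \<le> 1}"
  have M_eq: "{x. feasible x \<and> F x = \<theta>} = P"
  proof (intro set_eqI iffI)
    fix x assume "x \<in> {x. feasible x \<and> F x = \<theta>}"
    then have fx: "feasible x" and Fx: "F x = \<theta>" by auto
    then have x: "regular x" using feas_iff by auto
    have "F x \<le> \<theta>" using Fx by simp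
    then show "x \<in> P" using fx feas_iff Fle_iff[OF x] unfolding P_def by (auto simp: rc_add_l)
  next
    fix x assume "x \<in> P"
    then have x: "regular x" and Bx: "B *v x \<le> x" and qs: "q + s \<le> x" and r: "rc (rm + tm) x \<le> 1"
      unfolding P_def by auto
    have fx: "feasible x" using x Bx qs r feas_iff by (auto simp: rc_add_l)
    have "F x \<le> \<theta>" using Fle_iff[OF x] qs r by (auto simp: rc_add_l)
    then show "x \<in> {x. feasible x \<and> F x = \<theta>}" using lower[OF fx] fx by (auto intro: order.antisym)
  qed
  define V where "V = (rm + tm) v* Bs"
  have regV: "regular V"
  proof -
    have "mat 1 \<le> Bs" using mpow_le_kstar[of 0 B] unfolding Bs_def by simp
    then have "(rm + tm) v* mat 1 \<le> V" unfolding V_def by (rule vm_mono_l)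
    then have "tm \<le> V" using vle_add2[of tm rm] by simp
    then show ?thesis using regtm regular_mono by blast
  qed
  have uV: "u \<le> conj_vec V \<longleftrightarrow> rc (rm + tm) (Bs *v u) \<le> 1" for u
    using key2[OF regV, of u] unfolding V_def rc_mv by simp
  have P_eq: "P = {Bs *v u | u. q + s \<le> u \<and> u \<le> conj_vec V}"
  proof (intro set_eqI iffI)
    fix x assume "x \<in> P"
    then have x: "regular x" and Bx: "B *v x \<le> x" and qs: "q + s \<le> x" and r: "rc (rm + tm) x \<le> 1"
      unfolding P_def by auto
    have Bsx: "Bs *v x = x" using Bx by (rule Bs_fix)
    have "x \<le> conj_vec V" using uV[of x] r Bsx by simp
    then show "x \<in> {Bs *v u | u. q + s \<le> u \<and> u \<le> conj_vec V}" using qs Bsx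
      by (auto intro!: exI[of _ x])
  next
    fix x assume "x \<in> {Bs *v u | u. q + s \<le> u \<and> u \<le> conj_vec V}"
    then obtain u where xu: "x = Bs *v u" and qs: "q + s \<le> u" and uv: "u \<le> conj_vec V" by auto
    have ux: "u \<le> x" unfolding xu by (rule Bs_ge)
    have qsx: "q + s \<le> x" using qs ux by (rule order_trans)
    have "s \<le> x" using qsx by simp
    then have x: "regular x" using regs regular_mono by blast
    have "B *v x \<le> x" unfolding xu by (rule Bs_B)
    moreover have "rc (rm + tm) x \<le> 1" using uV[of u] uv xu by simp
    ultimately show "x \<in> P" unfolding P_def using x qsx by auto
  qed
  have a_nz: "a j \<noteq> 0" for j unfolding a_def using th0 h_nz by (simp add: mult_eq_0' pw_nonzero)
  have ex: "q + s \<le> conj_vec V"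
  proof -
    have Bq: "Bs *v q = (\<Sum>l\<in>UNIV. a l *s (Bs *v p l))" unfolding q_eq by (simp add: mv_sum_r mv_smult)
    have e1: "rc rm (Bs *v q) = (\<Sum>j\<in>UNIV. \<Sum>l\<in>UNIV. a j * (a l * rc (conj_vec (p j)) (Bs *v p l)))"
      unfolding rm_eq Bq by (simp add: rc_sum_l rc_smult_l rc_sum_r rc_smult_r sum_distrib_left)
        (rule trans[OF sum.swap], simp add: mult.left_commute)
    have e2: "rc rm (Bs *v s) = (\<Sum>j\<in>UNIV. a j * rc (conj_vec (p j)) (Bs *v s))"
      unfolding rm_eq by (simp add: rc_sum_l rc_smult_l)
    have e3: "rc tm (Bs *v q) = (\<Sum>l\<in>UNIV. a l * rc tm (Bs *v p l))"
      unfolding Bq by (simp add: rc_sum_r rc_smult_r)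
    have i1: "rc rm (Bs *v q) \<le> 1"
      unfolding e1 sum_le_iff'[OF finite]
    proof (intro ballI)
      fix j l :: 'm
      show "a j * (a l * rc (conj_vec (p j)) (Bs *v p l)) \<le> 1"
        unfolding a_def using terms[of j l] unfolding Ta_def
        by (intro termA_exist th0 h_nz w_pos) auto
    qed
    have i2: "rc rm (Bs *v s) \<le> 1"
      unfolding e2 sum_le_iff'[OF finite]
    proof
      fix j :: 'm
      show "a j * rc (conj_vec (p j)) (Bs *v s) \<le> 1"
        using pw_scale[OF th0 h_nz[of j] w_pos[of j] Q_nz[of j]] terms[of j j] unfolding a_def Tb_def by simp
    qed
    have i3: "rc tm (Bs *v q) \<le> 1"
      unfolding e3 sum_le_iff'[OF finite]
    proof
      fix l :: 'm
      show "a l * rc tm (Bs *v p l) \<le> 1"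
      proof (cases "rc tm (Bs *v p l) = 0")
        case True then show ?thesis by simp
      next
        case False
        show ?thesis using pw_scale[OF th0 h_nz[of l] w_pos[of l] False] terms[of l l]
          unfolding a_def Tc_def by simp
      qed
    qed
    have "rc (rm + tm) (Bs *v (q + s)) = rc rm (Bs *v q) + rc rm (Bs *v s) + (rc tm (Bs *v q) + rc tm (Bs *v s))"
      by (simp add: mv_add_r rc_add_l rc_add_r ac_simps)
    then have "rc (rm + tm) (Bs *v (q + s)) \<le> 1" using i1 i2 i3 ts by simp
    then show ?thesis using uV by simp
  qed
  have U: "{x. feasible x \<and> F x = \<theta>} = {Bs *v u | u. q + s \<le> u \<and> u \<le> conj_vec ((rm + tm) v* Bs)}"
    using M_eq P_eq unfolding V_def by simp
  have "Bs *v (q + s) \<in> {x. feasible x \<and> F x = \<theta>}" unfolding M_eq P_eq using ex by (auto intro!: exI[of _ "q + s"] simp: vle_add1 vle_add2)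
  then show ?thesis using U lower by auto
qed

end
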